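(* If $\mathcal{T}$ is a single-elimination tournament with at least $2$ players and $\sigma$ is a scoring system with distinct subset sums, then \[\dim(\mathcal{T},\sigma)=\max_{x\in M(\mathcal{T})}\Big(|P(x)|-\max_{u\in N^-(x)}|P(u)|\Big).\]
   Context: A single-elimination tournament is a finite directed graph $\mathcal{T}$ such that: (a) $\mathcal{T}$ has exactly one sink (vertex with no out-neighbours); (b) every non-sink vertex has exactly one out-neighbour; (c) $\mathcal{T}$ has no directed cycles; (d) $|N^-(v)|\ne 1$ for every vertex $v$, where $N^-(v)$ denotes the set of in-neighbours of $v$. The players $P(\mathcal{T})$ are the sources and the matches are $M(\mathcal{T})=V(\mathcal{T})\setminus P(\mathcal{T})$. For a vertex $u$, $P(u)$ is the set of players $a$ for which there is a directed walk from $a$ to $u$ (length $0$ allowed). A bracket is a function $B:V(\mathcal{T})\to P(\mathcal{T})$ with $B(a)=a$ for every player $a$ and $B(x)\in\{B(u):u\in N^-(x)\}$ for every match $x$. A scoring system is any function $\sigma:M(\mathcal{T})\to\mathbb{R}_{>0}$; it has distinct subset sums if for any two sets of matches $M,M'\subseteq M(\mathcal{T})$, $\sum_{x\in M}\sigma(x)=\sum_{x\in M'}\sigma(x)$ implies $M=M'$. For brackets $B,B'$ let $\mathrm{score}_\sigma(B,B')=\sum_{x\in M(\mathcal{T}):\,B(x)=B'(x)}\sigma(x)$. A set of brackets $\mathcal{B}$ is $\sigma$-resolving if for every pair of distinct brackets $B\ne B'$ there is $B_i\in\mathcal{B}$ with $\mathrm{score}_\sigma(B_i,B)\ne\mathrm{score}_\sigma(B_i,B')$.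 $\dim(\mathcal{T},\sigma)$ denotes the minimum size of a $\sigma$-resolving set. *)

theory Defs
  imports Complex_Main "HOL-Library.FuncSet"
begin

text \<open>A finite directed graph is given by a finite vertex set V and an edge set
E \<subseteq> V \<times> V ((u,v) \<in> E means an arc from u to v).\<close>

definition in_nbrs :: "('v \<times> 'v) set \<Rightarrow> 'v \<Rightarrow> 'v set" where
  "in_nbrs E v = {u. (u, v) \<in> E}"

definition out_nbrs :: "('v \<times> 'v) set \<Rightarrow> 'v \<Rightarrow> 'v set" where
  "out_nbrs E v = {w. (v, w) \<in> E}"

definition single_elim_tournament :: "'v set \<Rightarrow> ('v \<times> 'v) set \<Rightarrow> bool" where
  "single_elim_tournament V E \<longleftrightarrow>
     finite V \<and> E \<subseteq> V \<times> V \<and>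
     (\<exists>!s. s \<in> V \<and> out_nbrs E s = {}) \<and>
     (\<forall>v\<in>V. out_nbrs E v \<noteq> {} \<longrightarrow> card (out_nbrs E v) = 1) \<and>
     acyclic E \<and>
     (\<forall>v\<in>V. card (in_nbrs E v) \<noteq> 1)"

definition players :: "'v set \<Rightarrow> ('v \<times> 'v) set \<Rightarrow> 'v set" where
  "players V E = {v \<in> V. in_nbrs E v = {}}"

definition matches :: "'v set \<Rightarrow> ('v \<times> 'v) set \<Rightarrow> 'v set" where
  "matches V E = V - players V E"

definition Pl :: "'v set \<Rightarrow> ('v \<times> 'v) set \<Rightarrow> 'v \<Rightarrow> 'v set" where
  "Pl V E u = {a \<in> players V E. (a, u) \<in> E\<^sup>*}"

text \<open>Brackets are functions V \<rightarrow> P(T), represented extensionally (undefined outside V).\<close>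
definition bracket :: "'v set \<Rightarrow> ('v \<times> 'v) set \<Rightarrow> ('v \<Rightarrow> 'v) \<Rightarrow> bool" where
  "bracket V E B \<longleftrightarrow>
     B \<in> extensional V \<and> (\<forall>v\<in>V. B v \<in> players V E) \<and>
     (\<forall>a\<in>players V E. B a = a) \<and>
     (\<forall>x\<in>matches V E. B x \<in> B ` in_nbrs E x)"

definition scoring_system :: "'v set \<Rightarrow> ('v \<times> 'v) set \<Rightarrow> ('v \<Rightarrow> real) \<Rightarrow> bool" where
  "scoring_system V E \<sigma> \<longleftrightarrow> (\<forall>x\<in>matches V E. \<sigma> x > 0)"

definition distinct_subset_sums :: "'v set \<Rightarrow> ('v \<times> 'v) set \<Rightarrow> ('v \<Rightarrow> real) \<Rightarrow> bool" where
  "distinct_subset_sums V E \<sigma> \<longleftrightarrow>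
     (\<forall>M M'. M \<subseteq> matches V E \<longrightarrow> M' \<subseteq> matches V E \<longrightarrow>
        sum \<sigma> M = sum \<sigma> M' \<longrightarrow> M = M')"

definition score :: "'v set \<Rightarrow> ('v \<times> 'v) set \<Rightarrow> ('v \<Rightarrow> real) \<Rightarrow> ('v \<Rightarrow> 'v) \<Rightarrow> ('v \<Rightarrow> 'v) \<Rightarrow> real" where
  "score V E \<sigma> B B' = sum \<sigma> {x \<in> matches V E. B x = B' x}"

definition resolving :: "'v set \<Rightarrow> ('v \<times> 'v) set \<Rightarrow> ('v \<Rightarrow> real) \<Rightarrow> ('v \<Rightarrow> 'v) set \<Rightarrow> bool" where
  "resolving V E \<sigma> \<B> \<longleftrightarrow>
     (\<forall>B\<in>\<B>. bracket V E B) \<and>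
     (\<forall>B B'. bracket V E B \<longrightarrow> bracket V E B' \<longrightarrow> B \<noteq> B' \<longrightarrow>
        (\<exists>Bi\<in>\<B>. score V E \<sigma> Bi B \<noteq> score V E \<sigma> Bi B'))"

definition metric_dim :: "'v set \<Rightarrow> ('v \<times> 'v) set \<Rightarrow> ('v \<Rightarrow> real) \<Rightarrow> nat" where
  "metric_dim V E \<sigma> = (LEAST k. \<exists>\<B>. finite \<B> \<and> resolving V E \<sigma> \<B> \<and> card \<B> = k)"

end

theory Submission
  imports Defs
begin


locale SET =
  fixes V :: "'v set" and E :: "('v \<times> 'v) set"
  assumes set: "single_elim_tournament V E"
begin

lemma finV: "finite V" and EV: "E \<subseteq> V \<times> V" and acyc: "acyclic E"
  and outc: "\<And>v. v \<in> V \<Longrightarrow> out_nbrs E v \<noteq> {} \<Longrightarrow> card (out_nbrs E v) = 1"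
  using set unfolding single_elim_tournament_def by auto

lemma finE: "finite E" using finV EV finite_subset by blast

lemma wfE: "wf E" using finite_acyclic_wf[OF finE acyc] .

lemma func: assumes "(v,w) \<in> E" "(v,w') \<in> E" shows "w = w'"
proof -
  have v: "v \<in> V" using assms EV by auto
  have "w \<in> out_nbrs E v" "w' \<in> out_nbrs E v" using assms by (auto simp: out_nbrs_def)
  moreover then have "card (out_nbrs E v) = 1" using outc[OF v] by auto
  ultimately show ?thesis by (metis card_1_singletonE singletonD)
qed

lemma EV1: "(a,b) \<in> E \<Longrightarrow> a \<in> V" and EV2: "(a,b) \<in> E \<Longrightarrow> b \<in> V" using EV by auto

lemma rtV: "(a,b) \<in> E\<^sup>* \<Longrightarrow> a \<in> V \<Longrightarrow> b \<in> V"
  by (induction rule: rtrancl_induct) (auto dest: EV2)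

lemma trV: "(a,b) \<in> E\<^sup>+ \<Longrightarrow> a \<in> V \<and> b \<in> V"
  by (induction rule: trancl_induct) (auto dest: EV1 EV2)

lemma antisym: assumes "(x,y) \<in> E\<^sup>*" "(y,x) \<in> E\<^sup>*" shows "x = y"
proof (rule ccontr)
  assume "x \<noteq> y"
  then have "(x,y) \<in> E\<^sup>+" "(y,x) \<in> E\<^sup>+" using assms rtrancl_eq_or_trancl by metis+
  then have "(x,x) \<in> E\<^sup>+" by simp
  then show False using acyc unfolding acyclic_def by blast
qed

lemma noloop: "(x,y) \<in> E \<Longrightarrow> (y,x) \<in> E\<^sup>* \<Longrightarrow> False"
  using antisym acyc unfolding acyclic_def
  by (metis r_into_rtrancl r_into_trancl')

lemma firststep: assumes "(u,x) \<in> E" "(u,z) \<in> E\<^sup>*" shows "z = u \<or> (x,z) \<in> E\<^sup>*"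
  using assms(2)
proof (cases rule: converse_rtranclE)
  case (step y)
  then show ?thesis using func[OF assms(1), of y] by auto
qed simp

lemma linear: assumes "(a,x) \<in> E\<^sup>*" "(a,y) \<in> E\<^sup>*" shows "(x,y) \<in> E\<^sup>* \<or> (y,x) \<in> E\<^sup>*"
  using assms(1)
proof (induction rule: rtrancl_induct)
  case base then show ?case using assms(2) by simp
next
  case (step x x')
  from step(3) show ?case
  proof
    assume "(x,y) \<in> E\<^sup>*"
    then have "y = x \<or> (x',y) \<in> E\<^sup>*" using firststep[OF step(2)] by simp
    then show ?thesis using step(2) by auto
  next
    assume "(y,x) \<in> E\<^sup>*"
    then show ?thesis using step(2) by (meson rtrancl.rtrancl_into_rtrancl)
  qed
qed

abbreviation "pl \<equiv> players V E"
abbreviation "M \<equiv> matches V E"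
abbreviation "P \<equiv> Pl V E"

lemma player_in: "a \<in> pl \<Longrightarrow> (w,a) \<in> E\<^sup>* \<Longrightarrow> w = a"
  by (erule rtranclE) (auto simp: players_def in_nbrs_def)

lemma M_iff: "x \<in> M \<longleftrightarrow> x \<in> V \<and> in_nbrs E x \<noteq> {}"
  by (auto simp: matches_def players_def)

lemma pl_iff: "x \<in> pl \<longleftrightarrow> x \<in> V \<and> in_nbrs E x = {}"
  by (auto simp: players_def)

lemma edge_M: "(u,x) \<in> E \<Longrightarrow> x \<in> M"
  using M_iff EV2 by (auto simp: in_nbrs_def)

lemma in_nbrs_V: "in_nbrs E x \<subseteq> V" using EV by (auto simp: in_nbrs_def)

lemma fin_in: "finite (in_nbrs E x)" using finite_subset[OF in_nbrs_V finV] .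

lemma Pl_sub: "P x \<subseteq> pl" by (auto simp: Pl_def)
lemma fin_P: "finite (P x)" using finite_subset[OF Pl_sub] finV by (auto simp: players_def)

lemma Pl_player: "a \<in> pl \<Longrightarrow> P a = {a}"
  using player_in by (auto simp: Pl_def)

lemma Pl_mono: "(u,x) \<in> E\<^sup>* \<Longrightarrow> P u \<subseteq> P x"
  by (auto simp: Pl_def)

lemma Pl_match: assumes "x \<in> M" "a \<in> P x" shows "\<exists>u\<in>in_nbrs E x. a \<in> P u"
proof -
  have a: "a \<in> pl" "(a,x) \<in> E\<^sup>*" using assms(2) by (auto simp: Pl_def)
  have "a \<noteq> x" using assms(1) a(1) by (auto simp: matches_def)
  then obtain u where "(a,u) \<in> E\<^sup>*" "(u,x) \<in> E" using a(2) by (metis rtranclE)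
  then show ?thesis using a(1) by (auto simp: Pl_def in_nbrs_def)
qed

lemma Pl_disj: assumes "u \<in> in_nbrs E x" "u' \<in> in_nbrs E x" "a \<in> P u" "a \<in> P u'"
  shows "u = u'"
proof -
  have e: "(u,x) \<in> E" "(u',x) \<in> E" using assms by (auto simp: in_nbrs_def)
  have "(a,u) \<in> E\<^sup>*" "(a,u') \<in> E\<^sup>*" using assms by (auto simp: Pl_def)
  then have "(u,u') \<in> E\<^sup>* \<or> (u',u) \<in> E\<^sup>*" using linear by blast
  then show ?thesis
  proof
    assume "(u,u') \<in> E\<^sup>*"
    then have "u' = u \<or> (x,u') \<in> E\<^sup>*" using firststep[OF e(1)] by simp
    then show ?thesis using noloop[OF e(2)] by auto
  next
    assume "(u',u) \<in> E\<^sup>*"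
    then have "u = u' \<or> (x,u) \<in> E\<^sup>*" using firststep[OF e(2)] by simp
    then show ?thesis using noloop[OF e(1)] by auto
  qed
qed

lemma bracket_Pl: assumes "bracket V E B" shows "v \<in> V \<Longrightarrow> B v \<in> P v"
proof (induction v rule: wf_induct_rule[OF wfE])
  case (1 v)
  show ?case
  proof (cases "v \<in> pl")
    case True
    then show ?thesis using assms Pl_player by (auto simp: bracket_def)
  next
    case False
    then have "v \<in> M" using 1 by (auto simp: matches_def)
    then obtain u where u: "u \<in> in_nbrs E v" "B v = B u" using assms by (force simp: bracket_def)
    then have "(u,v) \<in> E" "u \<in> V" using EV by (auto simp: in_nbrs_def)
    then have "B u \<in> P u" using 1 by auto
    then show ?thesis using u Pl_mono \<open>(u,v) \<in> E\<close> by auto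
  qed
qed

lemma bracket_up: assumes "bracket V E B" "(x,y) \<in> E\<^sup>*" "a \<in> P x"
  shows "B y = a \<Longrightarrow> B x = a"
  using assms(2)
proof (induction rule: rtrancl_induct)
  case base then show ?case by simp
next
  case (step y z)
  have "z \<in> M" using edge_M step(2) .
  then obtain w where w: "w \<in> in_nbrs E z" "B z = B w" using assms(1) by (force simp: bracket_def)
  have "w \<in> V" using w in_nbrs_V by auto
  then have "B w \<in> P w" using bracket_Pl[OF assms(1)] by auto
  moreover have "a \<in> P y" using Pl_mono[OF step(1)] assms(3) by auto
  moreover have "y \<in> in_nbrs E z" using step(2) by (simp add: in_nbrs_def)
  ultimately have "w = y" using Pl_disj w step(4) by metis
  then show ?case using step w by simp
qed

end

context SET begin

lemma trancl_target_M: "(a,w) \<in> E\<^sup>+ \<Longrightarrow> w \<in> M"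
  by (erule tranclE) (auto intro: edge_M)

lemma player_not_M: "a \<in> pl \<Longrightarrow> a \<notin> M" by (auto simp: matches_def)

lemma exists_bracket:
  assumes R1: "\<And>a w. (a,w) \<in> R \<Longrightarrow> a \<in> pl \<and> (a,w) \<in> E\<^sup>*"
    and R2: "\<And>a w a' w' y. (a,w) \<in> R \<Longrightarrow> (a',w') \<in> R \<Longrightarrow> (a,y) \<in> E\<^sup>* \<Longrightarrow> (a',y) \<in> E\<^sup>*
               \<Longrightarrow> (y,w) \<in> E\<^sup>* \<Longrightarrow> (y,w') \<in> E\<^sup>* \<Longrightarrow> a = a'"
  shows "\<exists>B. bracket V E B \<and> (\<forall>a w. (a,w) \<in> R \<longrightarrow> B w = a)"
proof -
  define Q where "Q w u \<longleftrightarrow> u \<in> in_nbrs E w \<and> (\<forall>a t. (a,t) \<in> R \<longrightarrow> (a,w) \<in> E\<^sup>* \<longrightarrow> (w,t) \<in> E\<^sup>* \<longrightarrow> (a,u) \<in> E\<^sup>*)" for w u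
  define ch where "ch w = (SOME u. Q w u)" for w
  have chQ: "Q w (ch w)" if w: "w \<in> M" for w
  proof -
    have "\<exists>u. Q w u"
    proof (cases "\<exists>a t. (a,t) \<in> R \<and> (a,w) \<in> E\<^sup>* \<and> (w,t) \<in> E\<^sup>*")
      case True
      then obtain a t where at: "(a,t) \<in> R" "(a,w) \<in> E\<^sup>*" "(w,t) \<in> E\<^sup>*" by blast
      have "a \<noteq> w" using R1[OF at(1)] w player_not_M by auto
      then obtain u where u: "(a,u) \<in> E\<^sup>*" "(u,w) \<in> E" using at(2) by (metis rtranclE)
      have "Q w u" unfolding Q_def
      proof (intro conjI allI impI)
        show "u \<in> in_nbrs E w" using u by (simp add: in_nbrs_def)
        fix a' t' assume "(a',t') \<in> R" "(a',w) \<in> E\<^sup>*" "(w,t') \<in> E\<^sup>*"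
        then have "a' = a" using R2[OF _ at(1), of a' t' w] at by blast
        then show "(a',u) \<in> E\<^sup>*" using u by simp
      qed
      then show ?thesis by blast
    next
      case False
      obtain u where "u \<in> in_nbrs E w" using w M_iff by blast
      then have "Q w u" using False unfolding Q_def by blast
      then show ?thesis by blast
    qed
    then show ?thesis unfolding ch_def by (rule someI_ex)
  qed
  define good where "good a v \<longleftrightarrow> a \<in> P v \<and> (\<forall>w. (a,w) \<in> E\<^sup>+ \<longrightarrow> (w,v) \<in> E\<^sup>* \<longrightarrow> (a, ch w) \<in> E\<^sup>*)" for a v
  have good_ex: "v \<in> V \<longrightarrow> (\<exists>a. good a v)" for v
  proof (induction v rule: wf_induct_rule[OF wfE])
    case (1 v)
    show ?case
    proof
      assume v: "v \<in> V"
      show "\<exists>a. good a v"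
      proof (cases "v \<in> pl")
        case True
        have "good v v" unfolding good_def
          using True Pl_player[OF True] player_in[OF True] by (auto dest: trancl_target_M player_not_M)
        then show ?thesis by blast
      next
        case False
        then have vM: "v \<in> M" using v by (auto simp: matches_def)
        define u where "u = ch v"
        have uin: "u \<in> in_nbrs E v" using chQ[OF vM] unfolding u_def Q_def by blast
        then have uv: "(u,v) \<in> E" "u \<in> V" using in_nbrs_V by (auto simp: in_nbrs_def)
        then obtain a where ga: "good a u" using 1[OF uv(1)] uv(2) by (meson mp)
        have gaP: "a \<in> P u" and gaR: "\<And>w. (a,w) \<in> E\<^sup>+ \<Longrightarrow> (w,u) \<in> E\<^sup>* \<Longrightarrow> (a, ch w) \<in> E\<^sup>*"
          using ga unfolding good_def by blast+
        have au: "(a,u) \<in> E\<^sup>*" using gaP by (simp add: Pl_def)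
        have "good a v" unfolding good_def
        proof (intro conjI allI impI)
          show "a \<in> P v" using gaP Pl_mono[of u v] uv by blast
          fix w assume w: "(a,w) \<in> E\<^sup>+" "(w,v) \<in> E\<^sup>*"
          show "(a, ch w) \<in> E\<^sup>*"
          proof (cases "w = v")
            case True
            show ?thesis using au True u_def by simp
          next
            case False
            have "(w,u) \<in> E\<^sup>* \<or> (u,w) \<in> E\<^sup>*" using linear[of a w u] au trancl_into_rtrancl[OF w(1)] by blast
            then have "(w,u) \<in> E\<^sup>*"
            proof
              assume "(u,w) \<in> E\<^sup>*"
              then have "w = u \<or> (v,w) \<in> E\<^sup>*" using firststep[OF uv(1)] by simp
              then show ?thesis using antisym[of v w] w(2) False by blast
            qed
            then show ?thesis using gaR w(1) by blast
          qed
        qed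
        then show ?thesis by blast
      qed
    qed
  qed
  have good_un: "v \<in> V \<longrightarrow> (\<forall>a b. good a v \<longrightarrow> good b v \<longrightarrow> a = b)" for v
  proof (induction v rule: wf_induct_rule[OF wfE])
    case (1 v)
    show ?case
    proof (intro impI allI)
      fix a b assume v: "v \<in> V" and g: "good a v" "good b v"
      show "a = b"
      proof (cases "v \<in> pl")
        case True
        then show ?thesis using g Pl_player[OF True] by (auto simp: good_def)
      next
        case False
        then have vM: "v \<in> M" using v by (auto simp: matches_def)
        define u where "u = ch v"
        have uin: "u \<in> in_nbrs E v" using chQ[OF vM] unfolding u_def Q_def by blast
        then have uv: "(u,v) \<in> E" "u \<in> V" using in_nbrs_V by (auto simp: in_nbrs_def)
        have down: "good c u" if gc: "good c v" for c
        proof -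
          have c: "c \<in> pl" "(c,v) \<in> E\<^sup>*" using gc by (auto simp: good_def Pl_def)
          have "c \<noteq> v" using c(1) vM player_not_M by auto
          then have "(c,v) \<in> E\<^sup>+" using c(2) by (simp add: rtrancl_eq_or_trancl)
          then have "(c,u) \<in> E\<^sup>*" using gc unfolding good_def u_def by blast
          then have "c \<in> P u" using c by (simp add: Pl_def)
          moreover have "(w,v) \<in> E\<^sup>*" if "(w,u) \<in> E\<^sup>*" for w
            using that uv(1) by (meson rtrancl.rtrancl_into_rtrancl)
          ultimately show ?thesis using gc unfolding good_def by blast
        qed
        have "good a u" "good b u" using down g by auto
        moreover have "\<forall>a b. good a u \<longrightarrow> good b u \<longrightarrow> a = b" using 1[OF uv(1)] uv(2) by (rule mp)
        ultimately show ?thesis by blast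
      qed
    qed
  qed
  define B where "B v = (if v \<in> V then THE a. good a v else undefined)" for v
  have BG: "good (B v) v" if vV: "v \<in> V" for v
  proof -
    obtain a where ga: "good a v" using good_ex vV by blast
    have "\<forall>a b. good a v \<longrightarrow> good b v \<longrightarrow> a = b" using good_un vV by blast
    then have "good (THE a. good a v) v" using ga by (metis theI)
    then show ?thesis using vV B_def by simp
  qed
  have BU: "B v = a" if "v \<in> V" "good a v" for v a
    using BG[OF that(1)] good_un that by blast
  have brk: "bracket V E B" unfolding bracket_def
  proof (intro conjI ballI)
    show "B \<in> extensional V" unfolding B_def extensional_def by auto
    fix v assume "v \<in> V" then show "B v \<in> pl" using BG Pl_sub unfolding good_def by blast
  next
    fix a assume a: "a \<in> pl"
    have "good a a" unfolding good_def
      using a Pl_player[OF a] player_in[OF a] by (auto dest: trancl_target_M player_not_M)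
    then show "B a = a" using BU a by (auto simp: players_def)
  next
    fix x assume xM: "x \<in> M"
    then have xV: "x \<in> V" using M_iff by auto
    define u where "u = ch x"
    have uin: "u \<in> in_nbrs E x" using chQ[OF xM] unfolding u_def Q_def by blast
    then have uv: "(u,x) \<in> E" "u \<in> V" using in_nbrs_V by (auto simp: in_nbrs_def)
    define c where "c = B x"
    have gc: "good c x" using BG xV c_def by simp
    have c: "c \<in> pl" "(c,x) \<in> E\<^sup>*" using gc by (auto simp: good_def Pl_def)
    have "c \<noteq> x" using c(1) xM player_not_M by auto
    then have "(c,x) \<in> E\<^sup>+" using c(2) by (simp add: rtrancl_eq_or_trancl)
    then have "(c,u) \<in> E\<^sup>*" using gc unfolding good_def u_def by blast
    then have "c \<in> P u" using c by (simp add: Pl_def)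
    moreover have "(w,x) \<in> E\<^sup>*" if "(w,u) \<in> E\<^sup>*" for w
      using that uv(1) by (meson rtrancl.rtrancl_into_rtrancl)
    ultimately have "good c u" using gc unfolding good_def by blast
    then have "B u = c" using BU uv by blast
    then show "B x \<in> B ` in_nbrs E x" using uin c_def by (metis image_eqI)
  qed
  have "B w = a" if aw: "(a,w) \<in> R" for a w
  proof -
    have a: "a \<in> pl" "(a,w) \<in> E\<^sup>*" using R1[OF aw] by auto
    have wV: "w \<in> V" using rtV[OF a(2)] a(1) by (auto simp: players_def)
    have "good a w" unfolding good_def
    proof (intro conjI allI impI)
      show "a \<in> P w" using a by (simp add: Pl_def)
      fix y assume y: "(a,y) \<in> E\<^sup>+" "(y,w) \<in> E\<^sup>*"
      have "y \<in> M" using trancl_target_M[OF y(1)] .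
      then have "Q y (ch y)" by (rule chQ)
      then show "(a, ch y) \<in> E\<^sup>*" using aw y(2) trancl_into_rtrancl[OF y(1)] unfolding Q_def by blast
    qed
    then show ?thesis using BU wV by blast
  qed
  then show ?thesis using brk by blast
qed

end


context SET begin

lemma key_lower:
  assumes res: "resolving V E \<sigma> BB" and xM: "x \<in> M"
    and uu: "u \<in> in_nbrs E x" "u' \<in> in_nbrs E x" "u \<noteq> u'"
    and aa: "a \<in> P u" "a' \<in> P u'"
    and nw: "\<forall>Bi\<in>BB. Bi x \<noteq> a \<and> Bi x \<noteq> a'"
  shows False
proof -
  have ux: "(u,x) \<in> E" "(u',x) \<in> E" using uu by (auto simp: in_nbrs_def)
  have ap: "a \<in> pl" "(a,u) \<in> E\<^sup>*" "a' \<in> pl" "(a',u') \<in> E\<^sup>*" using aa by (auto simp: Pl_def)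
  have ax: "(a,x) \<in> E\<^sup>*" using ap(2) ux(1) by (meson rtrancl.rtrancl_into_rtrancl)
  have aPx: "a \<in> P x" "a' \<in> P x" using aa Pl_mono ux by (auto dest: r_into_rtrancl)
  have aneq: "a \<noteq> a'" using Pl_disj uu aa by blast
  define R where "R = {(a,x),(a',u')}"
  have notu': "(a,y) \<in> E\<^sup>* \<Longrightarrow> (y,u') \<in> E\<^sup>* \<Longrightarrow> False" for y
  proof -
    assume "(a,y) \<in> E\<^sup>*" "(y,u') \<in> E\<^sup>*"
    then have "a \<in> P u'" using ap(1) by (auto simp: Pl_def)
    then show False using Pl_disj uu aa by blast
  qed
  obtain B where B: "bracket V E B" "\<forall>c w. (c,w) \<in> R \<longrightarrow> B w = c"
  proof -
    have "\<exists>B. bracket V E B \<and> (\<forall>c w. (c,w) \<in> R \<longrightarrow> B w = c)"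
    proof (rule exists_bracket)
      fix c w assume "(c,w) \<in> R" then show "c \<in> pl \<and> (c,w) \<in> E\<^sup>*"
        using ap ax unfolding R_def by auto
    next
      fix c w c' w' y assume "(c,w) \<in> R" "(c',w') \<in> R" "(c,y) \<in> E\<^sup>*" "(c',y) \<in> E\<^sup>*"
        "(y,w) \<in> E\<^sup>*" "(y,w') \<in> E\<^sup>*"
      then show "c = c'" unfolding R_def using notu' by blast
    qed
    then show ?thesis using that by blast
  qed
  have Bx: "B x = a" and Bu': "B u' = a'" using B(2) unfolding R_def by auto
  define B' where "B' v = (if v \<in> V \<and> (x,v) \<in> E\<^sup>* \<and> B v = a then a' else B v)" for v
  have xV: "x \<in> V" using xM M_iff by auto
  have brk': "bracket V E B'" unfolding bracket_def
  proof (intro conjI ballI)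
    show "B' \<in> extensional V" using B(1) unfolding bracket_def extensional_def B'_def by auto
  next
    fix v assume "v \<in> V" then show "B' v \<in> pl" using B(1) ap unfolding bracket_def B'_def by auto
  next
    fix v assume v: "v \<in> pl"
    have "\<not> (x,v) \<in> E\<^sup>*" using player_in[OF v] xM v player_not_M by blast
    then show "B' v = v" using B(1) v unfolding bracket_def B'_def by auto
  next
    fix v assume vM: "v \<in> M"
    then have vV: "v \<in> V" using M_iff by auto
    show "B' v \<in> B' ` in_nbrs E v"
    proof (cases "(x,v) \<in> E\<^sup>* \<and> B v = a")
      case True
      show ?thesis
      proof (cases "v = x")
        case True
        have "\<not> (x,u') \<in> E\<^sup>*" using noloop[OF ux(2)] by blast
        then have "B' u' = a'" using Bu' unfolding B'_def by auto
        moreover have "B' v = a'" using \<open>(x,v) \<in> E\<^sup>* \<and> B v = a\<close> vV unfolding B'_def by auto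
        ultimately show ?thesis using uu(2) True by (metis image_eqI)
      next
        case False
        then have "(x,v) \<in> E\<^sup>+" using True by (simp add: rtrancl_eq_or_trancl)
        then obtain w where w: "(x,w) \<in> E\<^sup>*" "(w,v) \<in> E" by (meson tranclD2)
        obtain w0 where w0: "w0 \<in> in_nbrs E v" "B v = B w0" using B(1) vM by (force simp: bracket_def)
        have "w0 \<in> V" using w0 in_nbrs_V by auto
        then have "B w0 \<in> P w0" using bracket_Pl[OF B(1)] by auto
        moreover have "a \<in> P w" using Pl_mono[OF w(1)] aPx by auto
        ultimately have "w0 = w" using Pl_disj[of w0 v w a] w0 w(2) True by (simp add: in_nbrs_def)
        then have "B w = a" using w0 True by simp
        moreover have "w \<in> V" using w(2) EV by auto
        ultimately have "B' w = a'" using w(1) unfolding B'_def by auto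
        moreover have "B' v = a'" using True vV unfolding B'_def by auto
        ultimately show ?thesis using w(2) by (metis image_eqI in_nbrs_def mem_Collect_eq)
      qed
    next
      case False
      obtain w0 where w0: "w0 \<in> in_nbrs E v" "B v = B w0" using B(1) vM by (force simp: bracket_def)
      have "B' w0 = B w0"
      proof (rule ccontr)
        assume "B' w0 \<noteq> B w0"
        then have "(x,w0) \<in> E\<^sup>*" "B w0 = a" unfolding B'_def by (auto split: if_splits)
        moreover have "(w0,v) \<in> E" using w0 by (simp add: in_nbrs_def)
        ultimately show False using False w0 by (meson rtrancl.rtrancl_into_rtrancl)
      qed
      moreover have "B' v = B v" using False unfolding B'_def by auto
      ultimately show ?thesis using w0 by (metis image_eqI)
    qed
  qed
  have "B' x = a'" using Bx xV unfolding B'_def by auto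
  then have "B \<noteq> B'" using Bx aneq by auto
  then obtain Bi where Bi: "Bi \<in> BB" "score V E \<sigma> Bi B \<noteq> score V E \<sigma> Bi B'"
    using res B(1) brk' unfolding resolving_def by blast
  have bBi: "bracket V E Bi" using res Bi(1) unfolding resolving_def by blast
  have "{y \<in> M. Bi y = B y} = {y \<in> M. Bi y = B' y}"
  proof (intro Collect_cong conj_cong refl)
    fix y assume yM: "y \<in> M"
    show "Bi y = B y \<longleftrightarrow> Bi y = B' y"
    proof (cases "B' y = B y")
      case False
      then have y: "(x,y) \<in> E\<^sup>*" "B y = a" "B' y = a'" unfolding B'_def by (auto split: if_splits)
      have "Bi y \<noteq> a" using bracket_up[OF bBi y(1) aPx(1)] nw Bi(1) by auto
      moreover have "Bi y \<noteq> a'" using bracket_up[OF bBi y(1) aPx(2)] nw Bi(1) by auto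
      ultimately show ?thesis using y by simp
    qed simp
  qed
  then show False using Bi(2) unfolding score_def by simp
qed

lemma lower:
  assumes fin: "finite BB" and res: "resolving V E \<sigma> BB" and xM: "x \<in> M"
  shows "card (P x) \<le> card BB + Max ((\<lambda>u. card (P u)) ` in_nbrs E x)"
proof -
  define W where "W = (\<lambda>B. B x) ` BB"
  have cW: "card W \<le> card BB" unfolding W_def using card_image_le[OF fin] .
  have fW: "finite W" unfolding W_def using fin by simp
  have ne: "in_nbrs E x \<noteq> {}" using xM M_iff by auto
  obtain u where u: "u \<in> in_nbrs E x" "P x - W \<subseteq> P u"
  proof (cases "P x - W = {}")
    case True
    then show ?thesis using that ne by blast
  next
    case False
    then obtain a where a: "a \<in> P x" "a \<notin> W" by blast
    then obtain u where u: "u \<in> in_nbrs E x" "a \<in> P u" using Pl_match xM by blast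
    have "P x - W \<subseteq> P u"
    proof
      fix a' assume a': "a' \<in> P x - W"
      then obtain u' where u': "u' \<in> in_nbrs E x" "a' \<in> P u'" using Pl_match xM by blast
      show "a' \<in> P u"
      proof (cases "u' = u")
        case False
        have "\<forall>Bi\<in>BB. Bi x \<noteq> a \<and> Bi x \<noteq> a'" using a a' unfolding W_def by auto
        then have False using key_lower[OF res xM u(1) u'(1) False[symmetric] u(2) u'(2)] by blast
        then show ?thesis ..
      qed (use u' in simp)
    qed
    then show ?thesis using that u by blast
  qed
  have "card (P x) \<le> card (P x \<inter> W) + card (P x - W)"
    by (metis Int_Diff_Un Int_Diff_disjoint card_Un_disjoint fin_P finite_Diff finite_Int le_refl)
  also have "\<dots> \<le> card W + card (P u)"
    using card_mono[OF fW, of "P x \<inter> W"] card_mono[OF fin_P u(2)] by auto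
  also have "card (P u) \<le> Max ((\<lambda>u. card (P u)) ` in_nbrs E x)"
    using u(1) fin_in by (auto intro: Max_ge)
  finally show ?thesis using cW by linarith
qed

end


context SET begin

lemma wfT: "wf ((E\<^sup>+)\<inverse>)"
proof (rule finite_acyclic_wf_converse)
  show "finite (E\<^sup>+)" using finE by simp
  show "acyclic (E\<^sup>+)" using acyc by (metis acyclic_def trancl_id trans_trancl)
qed

lemma upper:
  assumes D: "\<forall>x\<in>M. card (P x) - Max ((\<lambda>u. card (P u)) ` in_nbrs E x) \<le> D"
    and dss: "distinct_subset_sums V E \<sigma>"
  shows "\<exists>BB. finite BB \<and> resolving V E \<sigma> BB \<and> card BB \<le> D"
proof -
  define cs where "cs x = (SOME u. u \<in> in_nbrs E x \<and> (\<forall>u'\<in>in_nbrs E x. card (P u') \<le> card (P u)))" for x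
  have cs: "cs x \<in> in_nbrs E x \<and> (\<forall>u'\<in>in_nbrs E x. card (P u') \<le> card (P (cs x)))"
    and csM: "Max ((\<lambda>u. card (P u)) ` in_nbrs E x) \<le> card (P (cs x))" if xM: "x \<in> M" for x
  proof -
    have ne: "in_nbrs E x \<noteq> {}" using xM M_iff by auto
    have "Max ((\<lambda>u. card (P u)) ` in_nbrs E x) \<in> (\<lambda>u. card (P u)) ` in_nbrs E x"
      using ne fin_in by (intro Max_in) auto
    then obtain u0 where u0: "u0 \<in> in_nbrs E x" "card (P u0) = Max ((\<lambda>u. card (P u)) ` in_nbrs E x)"
      by auto
    have "\<forall>u'\<in>in_nbrs E x. card (P u') \<le> card (P u0)" using u0 fin_in by (auto intro: Max_ge)
    then have ex: "\<exists>u. u \<in> in_nbrs E x \<and> (\<forall>u'\<in>in_nbrs E x. card (P u') \<le> card (P u))" using u0 by blast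
    show c: "cs x \<in> in_nbrs E x \<and> (\<forall>u'\<in>in_nbrs E x. card (P u') \<le> card (P (cs x)))"
      unfolding cs_def by (rule someI_ex[OF ex])
    show "Max ((\<lambda>u. card (P u)) ` in_nbrs E x) \<le> card (P (cs x))" using c u0 by metis
  qed
  define Sd where "Sd z = P z - P (cs z)" for z
  have cSd: "card (Sd z) \<le> D" if zM: "z \<in> M" for z
  proof -
    have e: "(cs z, z) \<in> E" using cs[OF zM] by (simp add: in_nbrs_def)
    have "P (cs z) \<subseteq> P z" using Pl_mono e by blast
    then have "card (Sd z) = card (P z) - card (P (cs z))" unfolding Sd_def using fin_P card_Diff_subset by blast
    also have "\<dots> \<le> card (P z) - Max ((\<lambda>u. card (P u)) ` in_nbrs E z)" using csM[OF zM] by linarith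
    also have "\<dots> \<le> D" using D zM by blast
    finally show ?thesis .
  qed
  define \<iota> where "\<iota> z = (SOME f. f ` Sd z \<subseteq> {..<D} \<and> inj_on f (Sd z))" for z
  have \<iota>: "\<iota> z ` Sd z \<subseteq> {..<D} \<and> inj_on (\<iota> z) (Sd z)" if zM: "z \<in> M" for z
  proof -
    have "\<exists>f. f ` Sd z \<subseteq> {..<D} \<and> inj_on f (Sd z)"
      using card_le_inj[of "Sd z" "{..<D}"] cSd[OF zM] fin_P unfolding Sd_def by auto
    then show ?thesis unfolding \<iota>_def by (rule someI_ex)
  qed
  define heavy where "heavy z \<longleftrightarrow> z \<in> M \<and> (\<forall>y\<in>M. (z,y) \<in> E\<^sup>+ \<longrightarrow> (z, cs y) \<in> E\<^sup>*)" for z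
  define R where "R i = {(a,z). heavy z \<and> a \<in> Sd z \<and> \<iota> z a = i}" for i
  have exB: "\<exists>B. bracket V E B \<and> (\<forall>a w. (a,w) \<in> R i \<longrightarrow> B w = a)" for i
  proof (rule exists_bracket)
    fix a w assume "(a,w) \<in> R i" then show "a \<in> pl \<and> (a,w) \<in> E\<^sup>*"
      unfolding R_def Sd_def Pl_def by auto
  next
    fix a z a' z' y assume r: "(a,z) \<in> R i" "(a',z') \<in> R i" and y: "(a,y) \<in> E\<^sup>*" "(a',y) \<in> E\<^sup>*"
      "(y,z) \<in> E\<^sup>*" "(y,z') \<in> E\<^sup>*"
    have h: "heavy z" "a \<in> Sd z" "\<iota> z a = i" "heavy z'" "a' \<in> Sd z'" "\<iota> z' a' = i"
      using r unfolding R_def by auto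
    have cross: False if hz: "heavy z1" and z12: "(z1,z2) \<in> E\<^sup>+" and hz2: "heavy z2"
      and c: "c \<in> Sd z2" "(c,y) \<in> E\<^sup>*" "(y,z1) \<in> E\<^sup>*" for z1 z2 c
    proof -
      have "z2 \<in> M" using hz2 unfolding heavy_def by auto
      then have "(z1, cs z2) \<in> E\<^sup>*" using hz z12 unfolding heavy_def by blast
      then have "(c, cs z2) \<in> E\<^sup>*" using c by (meson rtrancl_trans)
      then have "c \<in> P (cs z2)" using c(1) unfolding Sd_def Pl_def by auto
      then show False using c(1) unfolding Sd_def by auto
    qed
    have "(z,z') \<in> E\<^sup>* \<or> (z',z) \<in> E\<^sup>*" using linear y(3,4) by blast
    then show "a = a'"
    proof (cases "z = z'")
      case True
      have "z \<in> M" using h unfolding heavy_def by auto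
      then have "inj_on (\<iota> z) (Sd z)" using \<iota> by blast
      moreover have "\<iota> z a' = \<iota> z a" using h True by simp
      ultimately show ?thesis using inj_onD h True by metis
    next
      case False
      assume "(z,z') \<in> E\<^sup>* \<or> (z',z) \<in> E\<^sup>*"
      then show ?thesis
      proof
        assume "(z,z') \<in> E\<^sup>*"
        then have "(z,z') \<in> E\<^sup>+" using False by (simp add: rtrancl_eq_or_trancl)
        then show ?thesis using cross[of z z' a'] h y by blast
      next
        assume "(z',z) \<in> E\<^sup>*"
        then have "(z',z) \<in> E\<^sup>+" using False by (simp add: rtrancl_eq_or_trancl)
        then show ?thesis using cross[of z' z a] h y by blast
      qed
    qed
  qed
  define Bk where "Bk i = (SOME B. bracket V E B \<and> (\<forall>a w. (a,w) \<in> R i \<longrightarrow> B w = a))" for i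
  have Bk: "bracket V E (Bk i) \<and> (\<forall>a w. (a,w) \<in> R i \<longrightarrow> Bk i w = a)" for i
    unfolding Bk_def by (rule someI_ex[OF exB])
  have cover: "\<exists>i<D. Bk i v = a" if vM: "v \<in> M" and a: "a \<in> P v" "a \<notin> P (cs v)" for v a
  proof -
    define Z where "Z = {z \<in> M. (v,z) \<in> E\<^sup>* \<and> a \<notin> P (cs z)}"
    have "v \<in> Z" using vM a unfolding Z_def by auto
    then obtain z where z: "z \<in> Z" and zmax: "\<And>y. (y,z) \<in> (E\<^sup>+)\<inverse> \<Longrightarrow> y \<notin> Z"
      using wfE_min[OF wfT] by metis
    have zM: "z \<in> M" and vz: "(v,z) \<in> E\<^sup>*" and anz: "a \<notin> P (cs z)" using z unfolding Z_def by auto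
    have az: "(a,z) \<in> E\<^sup>*" "a \<in> pl" using a(1) vz unfolding Pl_def by auto
    have hz: "heavy z" unfolding heavy_def
    proof (intro conjI ballI impI)
      show "z \<in> M" by fact
      fix y assume yM: "y \<in> M" and zy: "(z,y) \<in> E\<^sup>+"
      have "y \<notin> Z" using zmax zy by auto
      moreover have "(v,y) \<in> E\<^sup>*" using vz zy by (meson rtrancl_trans trancl_into_rtrancl)
      ultimately have "a \<in> P (cs y)" using yM unfolding Z_def by auto
      then have acy: "(a, cs y) \<in> E\<^sup>*" unfolding Pl_def by auto
      have e: "(cs y, y) \<in> E" using cs[OF yM] by (simp add: in_nbrs_def)
      from linear[OF az(1) acy] show "(z, cs y) \<in> E\<^sup>*"
      proof
        assume "(cs y, z) \<in> E\<^sup>*"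
        then have "z = cs y \<or> (y,z) \<in> E\<^sup>*" using firststep[OF e] by simp
        then show ?thesis
        proof
          assume "(y,z) \<in> E\<^sup>*"
          then have "(z,z) \<in> E\<^sup>+" using zy by simp
          then show ?thesis using acyc unfolding acyclic_def by blast
        qed simp
      qed
    qed
    have aSd: "a \<in> Sd z" using a(1) anz Pl_mono[OF vz] unfolding Sd_def by auto
    define i where "i = \<iota> z a"
    have iD: "i < D" using \<iota>[OF zM] aSd unfolding i_def by auto
    have "(a,z) \<in> R i" using hz aSd unfolding R_def i_def by auto
    then have "Bk i z = a" using Bk by blast
    then have "Bk i v = a" using bracket_up[OF _ vz a(1)] Bk by blast
    then show ?thesis using iD by blast
  qed
  define BB where "BB = Bk ` {..<D}"
  have "resolving V E \<sigma> BB" unfolding resolving_def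
  proof (intro conjI allI impI ballI)
    fix B assume "B \<in> BB" then show "bracket V E B" using Bk unfolding BB_def by auto
  next
    fix B B' assume b: "bracket V E B" "bracket V E B'" and ne: "B \<noteq> B'"
    show "\<exists>Bi\<in>BB. score V E \<sigma> Bi B \<noteq> score V E \<sigma> Bi B'"
    proof (rule ccontr)
      assume "\<not> ?thesis"
      then have sc: "score V E \<sigma> (Bk i) B = score V E \<sigma> (Bk i) B'" if "i < D" for i
        using that unfolding BB_def by blast
      have eqs: "{y \<in> M. Bk i y = B y} = {y \<in> M. Bk i y = B' y}" if "i < D" for i
      proof -
        have "sum \<sigma> {y \<in> M. Bk i y = B y} = sum \<sigma> {y \<in> M. Bk i y = B' y}"
          using sc[OF that] unfolding score_def .
        moreover have "{y \<in> M. Bk i y = B y} \<subseteq> M" "{y \<in> M. Bk i y = B' y} \<subseteq> M" by auto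
        ultimately show ?thesis using dss unfolding distinct_subset_sums_def by blast
      qed
      have "v \<in> V \<longrightarrow> B v = B' v" for v
      proof (induction v rule: wf_induct_rule[OF wfE])
        case (1 v)
        show ?case
        proof
          assume vV: "v \<in> V"
          show "B v = B' v"
          proof (cases "v \<in> pl")
            case True then show ?thesis using b unfolding bracket_def by auto
          next
            case False
            then have vM: "v \<in> M" using vV by (auto simp: matches_def)
            obtain u where u: "u \<in> in_nbrs E v" "B v = B u" using b(1) vM by (force simp: bracket_def)
            obtain u' where u': "u' \<in> in_nbrs E v" "B' v = B' u'" using b(2) vM by (force simp: bracket_def)
            have uV: "u \<in> V" "u' \<in> V" using u u' in_nbrs_V by auto
            have IH: "B w = B' w" if "w \<in> in_nbrs E v" "w \<in> V" for w
              using 1 that by (simp add: in_nbrs_def)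
            have Pu: "B u \<in> P u" "B u' \<in> P u'" using bracket_Pl[OF b(1)] uV by auto
            have Pv: "B u \<in> P v" "B u' \<in> P v" using Pu Pl_mono u(1) u'(1)
              by (auto simp: in_nbrs_def dest: r_into_rtrancl)
            show ?thesis
            proof (rule ccontr)
              assume neq: "B v \<noteq> B' v"
              have Bv': "B' v = B u'" using u'(2) IH[OF u'(1) uV(2)] by simp
              have "u \<noteq> u'"
              proof
                assume "u = u'" then have "B v = B' v" using u(2) Bv' by simp
                then show False using neq by simp
              qed
              have csv: "cs v \<in> in_nbrs E v" using cs[OF vM] by blast
              have "\<exists>c. c \<in> P v \<and> c \<notin> P (cs v) \<and> (c = B v \<or> c = B' v)"
              proof (cases "u = cs v")
                case True
                then have "B u' \<notin> P (cs v)" using Pl_disj[OF u'(1) csv] Pu \<open>u \<noteq> u'\<close> True by blast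
                then show ?thesis using Pv(2) Bv' by (intro exI[of _ "B u'"]) simp
              next
                case False
                then have "B u \<notin> P (cs v)" using Pl_disj[OF u(1) csv] Pu False by blast
                then show ?thesis using Pv(1) u(2) by (intro exI[of _ "B u"]) simp
              qed
              then obtain c where c: "c \<in> P v" "c \<notin> P (cs v)" "c = B v \<or> c = B' v" by blast
              obtain i where i: "i < D" "Bk i v = c" using cover[OF vM c(1,2)] by blast
              have "v \<in> {y \<in> M. Bk i y = B y} \<longleftrightarrow> v \<in> {y \<in> M. Bk i y = B' y}" using eqs[OF i(1)] by (rule arg_cong)
              then have L: "Bk i v = B v \<longleftrightarrow> Bk i v = B' v" using vM by simp
              show False using L i(2) c(3) neq by auto
            qed
          qed
        qed
      qed
      then have "B = B'" using b unfolding bracket_def by (meson extensionalityI)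
      then show False using ne by simp
    qed
  qed
  moreover have "card BB \<le> D" unfolding BB_def using card_image_le[of "{..<D}" Bk] by simp
  moreover have "finite BB" unfolding BB_def by simp
  ultimately show ?thesis by blast
qed

end

theorem lemma5p7:
  fixes V :: "'v set" and E :: "('v \<times> 'v) set" and \<sigma> :: "'v \<Rightarrow> real"
  assumes "single_elim_tournament V E"
    and "card (players V E) \<ge> 2"
    and "scoring_system V E \<sigma>"
    and "distinct_subset_sums V E \<sigma>"
  shows "metric_dim V E \<sigma> =
    Max ((\<lambda>x. card (Pl V E x) - Max ((\<lambda>u. card (Pl V E u)) ` in_nbrs E x)) ` matches V E)"
proof -
  interpret S: SET V E by (rule SET.intro) (rule assms(1))
  define f where "f x = card (Pl V E x) - Max ((\<lambda>u. card (Pl V E u)) ` in_nbrs E x)" for x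
  define D where "D = Max (f ` matches V E)"
  have finM: "finite (matches V E)" using S.finV unfolding matches_def by simp
  have finpl: "finite (players V E)" using S.finV unfolding players_def by simp
  have neM: "matches V E \<noteq> {}"
  proof
    assume M0: "matches V E = {}"
    have E0: "E = {}"
    proof (rule ccontr)
      assume "E \<noteq> {}"
      then obtain u v where "(u,v) \<in> E" by auto
      then have "v \<in> matches V E" by (rule S.edge_M)
      then show False using M0 by simp
    qed
    have "\<not> (\<forall>x\<in>players V E. \<forall>y\<in>players V E. x = y)"
      using assms(2) card_le_Suc0_iff_eq[OF finpl] by auto
    then obtain a b where ab: "a \<in> players V E" "b \<in> players V E" "a \<noteq> b" by blast
    have "a \<in> V \<and> out_nbrs E a = {}" "b \<in> V \<and> out_nbrs E b = {}"
      using ab E0 unfolding players_def out_nbrs_def by auto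
    moreover have "\<exists>!s. s \<in> V \<and> out_nbrs E s = {}"
      using assms(1) unfolding single_elim_tournament_def by blast
    ultimately show False using ab(3) by blast
  qed
  have fD: "\<forall>x\<in>matches V E. f x \<le> D" unfolding D_def using finM by auto
  obtain BB where BB: "finite BB" "resolving V E \<sigma> BB" "card BB \<le> D"
    using S.upper[of D \<sigma>] fD assms(4) unfolding f_def by blast
  have ex: "\<exists>BB. finite BB \<and> resolving V E \<sigma> BB \<and> card BB = card BB" using BB by blast
  have le1: "metric_dim V E \<sigma> \<le> D"
  proof -
    have "metric_dim V E \<sigma> \<le> card BB" unfolding metric_dim_def
      by (rule Least_le) (use BB in blast)
    then show ?thesis using BB(3) by simp
  qed
  have "\<exists>BB0. finite BB0 \<and> resolving V E \<sigma> BB0 \<and> card BB0 = metric_dim V E \<sigma>"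
    unfolding metric_dim_def by (rule LeastI_ex) (use BB in blast)
  then obtain BB0 where BB0: "finite BB0" "resolving V E \<sigma> BB0" "card BB0 = metric_dim V E \<sigma>" by blast
  have "\<forall>x\<in>matches V E. f x \<le> card BB0"
    using S.lower[OF BB0(1,2)] unfolding f_def by (simp add: le_diff_conv add.commute)
  then have le2: "D \<le> metric_dim V E \<sigma>" unfolding D_def using finM neM BB0(3) by simp
  show ?thesis using le1 le2 unfolding D_def f_def by simp
qed

end
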